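(* Let $\Omega$ be a finite-dimensional real Euclidean space, let $N \geq 1$, and let $f_1,\dots,f_N \colon \Omega \to \mathbb{R}$ be continuous convex functions, each of which is $\mu$-strongly convex for some $\mu > 0$. Let $\nu \in (0,\mu]$, fix an index $j \in \{1,\dots,N\}$ and a vector $\zeta_j \in \Omega$. Define $g_j(\theta) = f_j(\theta) - \frac{\nu}{2}\|\theta\|^2$ and \[ E^{j}(\theta) = f_j(\theta) - \nu \langle \zeta_j, \theta\rangle, \qquad E^{j}_{\mathrm{d}}(\xi) = g_j^*(\xi) + \frac{1}{2\nu}\|\xi - \nu \zeta_j\|^2 \qquad (\theta,\xi \in \Omega). \] If $\theta_j \in \Omega$ minimizes $E^{j}$ over $\Omega$, then $\xi_j = \nu(\zeta_j - \theta_j)$ minimizes $E^{j}_{\mathrm{d}}$ over $\Omega$, and moreover \[ E^{j}(\theta_j) + E^{j}_{\mathrm{d}}(\xi_j) = 0. \]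
   Context: For a function $h \colon \Omega \to \mathbb{R}\cup\{+\infty\}$, $h^*(p) = \sup_{x\in\Omega}\{\langle p, x\rangle - h(x)\}$ denotes its Legendre--Fenchel conjugate. A function $h$ is $\mu$-strongly convex if $h - \frac{\mu}{2}\|\cdot\|^2$ is convex. In the paper $\zeta_j$ is the local control variate $\zeta_j^{(n)}$ of client $j$ at round $n$ of the algorithm DualFL; the statement holds for that vector, whatever it is. *)

theory Defs
  imports "HOL-Analysis.Analysis"
begin

definition fenchel_conj :: "('a::real_inner \<Rightarrow> real) \<Rightarrow> 'a \<Rightarrow> ereal" where
  "fenchel_conj h p = (SUP x\<in>UNIV. ereal (inner p x - h x))"

definition strongly_convex_on :: "real \<Rightarrow> ('a::real_inner) set \<Rightarrow> ('a \<Rightarrow> real) \<Rightarrow> bool" where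
  "strongly_convex_on \<mu> S h \<longleftrightarrow> convex_on S (\<lambda>x. h x - \<mu> / 2 * (norm x)\<^sup>2)"

end

theory Submission
  imports Defs
begin

lemma norm_comb_sq:
  fixes x y :: "'a::real_inner"
  shows "(norm ((1 - t) *\<^sub>R x + t *\<^sub>R y))\<^sup>2 = (1 - t) * (norm x)\<^sup>2 + t * (norm y)\<^sup>2 - t * (1 - t) * (norm (x - y))\<^sup>2"
  unfolding power2_norm_eq_inner by (simp add: inner_simps algebra_simps inner_commute)

lemma convex_norm_sq: "convex_on UNIV (\<lambda>x::'a::real_inner. (norm x)\<^sup>2)"
proof (rule convex_onI)
  fix t :: real and x y :: 'a assume "0 < t" "t < 1"
  then have "t * (1 - t) * (norm (x - y))\<^sup>2 \<ge> 0" by simp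
  then show "(norm ((1 - t) *\<^sub>R x + t *\<^sub>R y))\<^sup>2 \<le> (1 - t) * (norm x)\<^sup>2 + t * (norm y)\<^sup>2"
    unfolding norm_comb_sq by linarith
qed simp

lemma limit_arg:
  fixes a b c :: real
  assumes "\<And>t. 0 < t \<Longrightarrow> t \<le> 1 \<Longrightarrow> a \<ge> b - t * c" and "c \<ge> 0"
  shows "a \<ge> b"
proof (rule ccontr)
  assume "\<not> a \<ge> b"
  then have d: "b - a > 0" by simp
  define t where "t = min 1 ((b - a) / (2 * (c + 1)))"
  have t0: "t > 0" using d assms(2) by (simp add: t_def)
  have t1: "t \<le> 1" by (simp add: t_def)
  have "t * c \<le> (b - a) / (2 * (c + 1)) * c"
    using assms(2) by (intro mult_right_mono) (auto simp: t_def)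
  also have "\<dots> < b - a"
  proof -
    have "(b - a) * c < (b - a) * (2 * (c + 1))" using d assms(2) by simp
    then show ?thesis using assms(2) by (simp add: divide_simps)
  qed
  finally show False using assms(1)[OF t0 t1] by linarith
qed

theorem proposition3p1:
  fixes f :: "nat \<Rightarrow> 'a::euclidean_space \<Rightarrow> real"
    and N j :: nat and \<mu> \<nu> :: real and \<zeta>j \<theta>j :: 'a
  assumes "N \<ge> 1"
    and cont: "\<forall>i\<in>{1..N}. continuous_on UNIV (f i)"
    and cvx: "\<forall>i\<in>{1..N}. convex_on UNIV (f i)"
    and "\<mu> > 0"
    and sc: "\<forall>i\<in>{1..N}. strongly_convex_on \<mu> UNIV (f i)"
    and "0 < \<nu>" and "\<nu> \<le> \<mu>"
    and "j \<in> {1..N}"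
    and minE: "\<forall>\<theta>. f j \<theta>j - \<nu> * inner \<zeta>j \<theta>j \<le> f j \<theta> - \<nu> * inner \<zeta>j \<theta>"
  shows "(let g = (\<lambda>\<theta>. f j \<theta> - \<nu> / 2 * (norm \<theta>)\<^sup>2);
              Ed = (\<lambda>\<xi>. fenchel_conj g \<xi> + ereal (1 / (2 * \<nu>) * (norm (\<xi> - \<nu> *\<^sub>R \<zeta>j))\<^sup>2));
              \<xi>j = \<nu> *\<^sub>R (\<zeta>j - \<theta>j)
          in (\<forall>\<xi>. Ed \<xi>j \<le> Ed \<xi>) \<and>
             ereal (f j \<theta>j - \<nu> * inner \<zeta>j \<theta>j) + Ed \<xi>j = 0)"
proof -
  define g where "g = (\<lambda>\<theta>. f j \<theta> - \<nu> / 2 * (norm \<theta>)\<^sup>2)"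
  define \<xi>j where "\<xi>j = \<nu> *\<^sub>R (\<zeta>j - \<theta>j)"
  have F: "convex_on UNIV (\<lambda>x. f j x - \<mu> / 2 * (norm x)\<^sup>2)"
    using sc \<open>j \<in> {1..N}\<close> by (simp add: strongly_convex_on_def)
  have "convex_on UNIV (\<lambda>x. (f j x - \<mu> / 2 * (norm x)\<^sup>2) + (\<mu> - \<nu>) / 2 * (norm x)\<^sup>2)"
    using F convex_norm_sq \<open>\<nu> \<le> \<mu>\<close> by (intro convex_on_add convex_on_cmul) auto
  moreover have "(\<lambda>x. (f j x - \<mu> / 2 * (norm x)\<^sup>2) + (\<mu> - \<nu>) / 2 * (norm x)\<^sup>2) = g"
    unfolding g_def by (rule ext) (simp add: field_simps)
  ultimately have gc: "convex_on UNIV g" by simp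
  have sub: "g x \<ge> g \<theta>j + inner \<xi>j (x - \<theta>j)" for x
  proof (rule limit_arg[where c = "\<nu> / 2 * (norm (x - \<theta>j))\<^sup>2"])
    fix t :: real assume t: "0 < t" "t \<le> 1"
    define d where "d = x - \<theta>j"
    have eq: "(1 - t) *\<^sub>R \<theta>j + t *\<^sub>R x = \<theta>j + t *\<^sub>R d" by (simp add: d_def algebra_simps)
    have c1: "g (\<theta>j + t *\<^sub>R d) \<le> (1 - t) * g \<theta>j + t * g x"
      using convex_onD[OF gc, of t \<theta>j x] t eq by simp
    have m1: "f j \<theta>j - \<nu> * inner \<zeta>j \<theta>j \<le> f j (\<theta>j + t *\<^sub>R d) - \<nu> * inner \<zeta>j (\<theta>j + t *\<^sub>R d)"
      using minE by blast
    have nq: "(norm (\<theta>j + t *\<^sub>R d))\<^sup>2 = (norm \<theta>j)\<^sup>2 + 2 * t * inner \<theta>j d + t\<^sup>2 * (norm d)\<^sup>2"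
      unfolding power2_norm_eq_inner by (simp add: inner_simps algebra_simps inner_commute power2_eq_square)
    have "t * (g x - g \<theta>j) \<ge> t * (\<nu> * inner \<zeta>j d - \<nu> * inner \<theta>j d - t * (\<nu> / 2 * (norm d)\<^sup>2))"
    proof -
      have "g (\<theta>j + t *\<^sub>R d) = f j (\<theta>j + t *\<^sub>R d) - \<nu> / 2 * (norm (\<theta>j + t *\<^sub>R d))\<^sup>2"
           "g \<theta>j = f j \<theta>j - \<nu> / 2 * (norm \<theta>j)\<^sup>2" by (simp_all add: g_def)
      then have "g (\<theta>j + t *\<^sub>R d) - g \<theta>j \<ge> \<nu> * (t * inner \<zeta>j d) - \<nu> / 2 * ((norm (\<theta>j + t *\<^sub>R d))\<^sup>2 - (norm \<theta>j)\<^sup>2)"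
        using m1 by (simp add: inner_simps algebra_simps)
      also have "\<nu> / 2 * ((norm (\<theta>j + t *\<^sub>R d))\<^sup>2 - (norm \<theta>j)\<^sup>2) = t * (\<nu> * inner \<theta>j d) + t * (t * (\<nu> / 2 * (norm d)\<^sup>2))"
        unfolding nq by (simp add: algebra_simps power2_eq_square)
      finally have "g (\<theta>j + t *\<^sub>R d) - g \<theta>j \<ge> t * (\<nu> * inner \<zeta>j d) - (t * (\<nu> * inner \<theta>j d) + t * (t * (\<nu> / 2 * (norm d)\<^sup>2)))"
        by (simp add: algebra_simps)
      moreover have "t * (g x - g \<theta>j) \<ge> g (\<theta>j + t *\<^sub>R d) - g \<theta>j" using c1 by (simp add: algebra_simps)
      moreover have "t * (\<nu> * inner \<zeta>j d - \<nu> * inner \<theta>j d - t * (\<nu> / 2 * (norm d)\<^sup>2)) = t * (\<nu> * inner \<zeta>j d) - (t * (\<nu> * inner \<theta>j d) + t * (t * (\<nu> / 2 * (norm d)\<^sup>2)))"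
        by (simp add: algebra_simps)
      ultimately show ?thesis by linarith
    qed
    then have "g x - g \<theta>j \<ge> \<nu> * inner \<zeta>j d - \<nu> * inner \<theta>j d - t * (\<nu> / 2 * (norm d)\<^sup>2)"
      using t by simp
    then show "g x \<ge> g \<theta>j + inner \<xi>j (x - \<theta>j) - t * (\<nu> / 2 * (norm (x - \<theta>j))\<^sup>2)"
      by (simp add: \<xi>j_def d_def inner_simps algebra_simps)
  qed (use \<open>0 < \<nu>\<close> in simp)
  have conj_j: "fenchel_conj g \<xi>j = ereal (inner \<xi>j \<theta>j - g \<theta>j)"
    unfolding fenchel_conj_def
  proof (rule antisym)
    show "(SUP x\<in>UNIV. ereal (inner \<xi>j x - g x)) \<le> ereal (inner \<xi>j \<theta>j - g \<theta>j)"
    proof (rule SUP_least)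
      fix x show "ereal (inner \<xi>j x - g x) \<le> ereal (inner \<xi>j \<theta>j - g \<theta>j)"
        using sub[of x] by (simp add: inner_simps)
    qed
  qed (rule SUP_upper, simp)
  have conj_ge: "fenchel_conj g \<xi> \<ge> ereal (inner \<xi> \<theta>j - g \<theta>j)" for \<xi>
    unfolding fenchel_conj_def by (rule SUP_upper) simp
  have th: "inner \<theta>j \<theta>j = norm \<theta>j * norm \<theta>j" by (metis power2_eq_square power2_norm_eq_inner)
  have h: "inner \<xi>j \<theta>j + 1 / (2 * \<nu>) * (norm (\<xi>j - \<nu> *\<^sub>R \<zeta>j))\<^sup>2
      \<le> inner \<xi> \<theta>j + 1 / (2 * \<nu>) * (norm (\<xi> - \<nu> *\<^sub>R \<zeta>j))\<^sup>2" for \<xi>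
  proof -
    define u where "u = \<xi> - \<nu> *\<^sub>R \<zeta>j"
    have xi: "\<xi> = u + \<nu> *\<^sub>R \<zeta>j" by (simp add: u_def)
    have x2: "\<xi>j - \<nu> *\<^sub>R \<zeta>j = - \<nu> *\<^sub>R \<theta>j" by (simp add: \<xi>j_def algebra_simps)
    have "(norm (u + \<nu> *\<^sub>R \<theta>j))\<^sup>2 = (norm u)\<^sup>2 + 2 * \<nu> * inner u \<theta>j + \<nu>\<^sup>2 * (norm \<theta>j)\<^sup>2"
      unfolding power2_norm_eq_inner by (simp add: inner_simps algebra_simps inner_commute power2_eq_square)
    moreover have "(norm (u + \<nu> *\<^sub>R \<theta>j))\<^sup>2 \<ge> 0" by simp
    ultimately have A: "0 \<le> (norm u)\<^sup>2 + 2 * \<nu> * inner u \<theta>j + \<nu>\<^sup>2 * (norm \<theta>j)\<^sup>2" by linarith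
    have B: "inner \<xi> \<theta>j + 1 / (2 * \<nu>) * (norm u)\<^sup>2 - (inner \<xi>j \<theta>j + 1 / (2 * \<nu>) * (norm (- \<nu> *\<^sub>R \<theta>j))\<^sup>2)
       = ((norm u)\<^sup>2 + 2 * \<nu> * inner u \<theta>j + \<nu>\<^sup>2 * (norm \<theta>j)\<^sup>2) / (2 * \<nu>)"
      using \<open>0 < \<nu>\<close> th unfolding xi \<xi>j_def
      by (simp add: inner_simps field_simps power2_eq_square power2_norm_eq_inner inner_commute)
    have "0 \<le> ((norm u)\<^sup>2 + 2 * \<nu> * inner u \<theta>j + \<nu>\<^sup>2 * (norm \<theta>j)\<^sup>2) / (2 * \<nu>)"
      using A \<open>0 < \<nu>\<close> by simp
    then show ?thesis using B x2 u_def by simp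
  qed
  have part1: "fenchel_conj g \<xi>j + ereal (1 / (2 * \<nu>) * (norm (\<xi>j - \<nu> *\<^sub>R \<zeta>j))\<^sup>2)
      \<le> fenchel_conj g \<xi> + ereal (1 / (2 * \<nu>) * (norm (\<xi> - \<nu> *\<^sub>R \<zeta>j))\<^sup>2)" for \<xi>
  proof -
    have "fenchel_conj g \<xi>j + ereal (1 / (2 * \<nu>) * (norm (\<xi>j - \<nu> *\<^sub>R \<zeta>j))\<^sup>2)
        = ereal (inner \<xi>j \<theta>j - g \<theta>j + 1 / (2 * \<nu>) * (norm (\<xi>j - \<nu> *\<^sub>R \<zeta>j))\<^sup>2)"
      by (simp add: conj_j)
    also have "\<dots> \<le> ereal (inner \<xi> \<theta>j - g \<theta>j + 1 / (2 * \<nu>) * (norm (\<xi> - \<nu> *\<^sub>R \<zeta>j))\<^sup>2)"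
      using h[of \<xi>] by simp
    also have "\<dots> = ereal (inner \<xi> \<theta>j - g \<theta>j) + ereal (1 / (2 * \<nu>) * (norm (\<xi> - \<nu> *\<^sub>R \<zeta>j))\<^sup>2)"
      by simp
    also have "\<dots> \<le> fenchel_conj g \<xi> + ereal (1 / (2 * \<nu>) * (norm (\<xi> - \<nu> *\<^sub>R \<zeta>j))\<^sup>2)"
      by (intro add_right_mono conj_ge)
    finally show ?thesis .
  qed
  have x2: "\<xi>j - \<nu> *\<^sub>R \<zeta>j = - \<nu> *\<^sub>R \<theta>j" by (simp add: \<xi>j_def algebra_simps)
  have part2: "(f j \<theta>j - \<nu> * inner \<zeta>j \<theta>j) + (inner \<xi>j \<theta>j - g \<theta>j + 1 / (2 * \<nu>) * (norm (\<xi>j - \<nu> *\<^sub>R \<zeta>j))\<^sup>2) = 0"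
    using \<open>0 < \<nu>\<close> th unfolding x2 g_def \<xi>j_def
    by (simp add: inner_simps field_simps power2_eq_square power2_norm_eq_inner)
  show ?thesis
    unfolding Let_def g_def[symmetric] \<xi>j_def[symmetric]
    using part1 part2 by (simp add: conj_j)
qed

end
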